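(* Let $k\ge1$ and let $A_k$ be the matrix defined below. The reduced Gröbner basis of the toric ideal $I_{A_k}$ with respect to the lexicographic term ordering $\prec_{\mathrm{lex}}$ is $\{\mathbf{x}^{\mathbf{u}^+}-\mathbf{x}^{\mathbf{u}^-}:\mathbf{u}\in\mathcal{R}\}$, where $\mathcal{R}$ consists of the vector $(\mathbf{0}_k,\mathbf{1}_k,\mathbf{0}_k,-\mathbf{1}_k,1,-1)^{\mathsf T}$ together with the vectors $(\mathbf{e}_i,-\mathbf{e}_i,\mathbf{0}_k,\mathbf{0}_k,0,0)^{\mathsf T}$ and $(\mathbf{0}_k,\mathbf{0}_k,\mathbf{e}_i,-\mathbf{e}_i,0,0)^{\mathsf T}$ for $i\in[k]$ (here $\mathbf{e}_i$ are the standard unit vectors of $\mathbb{Z}^k$).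
   Context: $I_k$ is the $k\times k$ identity, $\mathbf{1}_k$ the all-ones and $\mathbf{0}_k$ the zero vector in $\mathbb{Z}^k$. Define $$A_k=\begin{pmatrix} I_k & I_k & 0 & 0 & -\mathbf{1}_k & \mathbf{0}\\ 0&0&I_k&I_k&\mathbf{0}&-\mathbf{1}_k\\ 0&0&0&0&1&1\end{pmatrix}\in\mathbb{Z}^{(2k+1)\times(4k+2)}$$ (zero blocks of appropriate sizes; last two columns are single columns). The toric ideal of $A\in\mathbb{Z}^{d\times n}$ is $I_A=\langle\mathbf{x}^{\mathbf{u}^+}-\mathbf{x}^{\mathbf{u}^-}:\mathbf{u}\in\ker(A)\cap\mathbb{Z}^n\rangle\subset K[x_1,\dots,x_n]$, with $\mathbf{u}^+,\mathbf{u}^-\in\mathbb{Z}^n_{\ge0}$ the positive and negative parts of $\mathbf{u}$. The lexicographic order on monomials (identified with exponent vectors in $\mathbb{Z}^n_{\ge0}$): $\mathbf{u}\prec_{\mathrm{lex}}\mathbf{v}$ iff $u_i<v_i$ for the smallest index $i$ with $u_i\neq v_i$. *)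

theory Defs
  imports "HOL-Library.Poly_Mapping"
begin

(* Monomials in variables x_0, x_1, ... (x_j here is x_{j+1} of the paper) are
   exponent vectors (finitely supported nat => nat); polynomials over a field K are
   finitely supported maps monomial => K, with the convolution product of Poly_Mapping. *)

type_synonym monom = "nat \<Rightarrow>\<^sub>0 nat"
type_synonym 'a mpoly = "monom \<Rightarrow>\<^sub>0 'a"

definition mon :: "monom \<Rightarrow> 'a::field mpoly" where
  "mon m = Poly_Mapping.single m 1"

definition polyring :: "nat \<Rightarrow> 'a::field mpoly set" where
  "polyring n = {p. \<forall>m\<in>Poly_Mapping.keys p. Poly_Mapping.keys (m::monom) \<subseteq> {..<n}}"

inductive_set ideal_gen :: "nat \<Rightarrow> 'a::field mpoly set \<Rightarrow> 'a mpoly set"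
  for n :: nat and S :: "'a mpoly set" where
  zero: "0 \<in> ideal_gen n S"
| gen: "s \<in> S \<Longrightarrow> r \<in> polyring n \<Longrightarrow> r * s \<in> ideal_gen n S"
| add: "p \<in> ideal_gen n S \<Longrightarrow> q \<in> ideal_gen n S \<Longrightarrow> p + q \<in> ideal_gen n S"

text \<open>Vectors in Z^n are functions nat \<Rightarrow> int vanishing outside {..<n};
 a d x n integer matrix is a function nat \<Rightarrow> nat \<Rightarrow> int (0-indexed).\<close>
definition int_kernel :: "nat \<Rightarrow> nat \<Rightarrow> (nat \<Rightarrow> nat \<Rightarrow> int) \<Rightarrow> (nat \<Rightarrow> int) set" where
  "int_kernel d n A = {u. (\<forall>j\<ge>n. u j = 0) \<and> (\<forall>i<d. (\<Sum>j<n. A i j * u j) = 0)}"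

definition pos_part :: "nat \<Rightarrow> (nat \<Rightarrow> int) \<Rightarrow> monom" where
  "pos_part n u = (\<Sum>j<n. Poly_Mapping.single j (nat (u j)))"

definition neg_part :: "nat \<Rightarrow> (nat \<Rightarrow> int) \<Rightarrow> monom" where
  "neg_part n u = (\<Sum>j<n. Poly_Mapping.single j (nat (- u j)))"

definition binom :: "nat \<Rightarrow> (nat \<Rightarrow> int) \<Rightarrow> 'a::field mpoly" where
  "binom n u = mon (pos_part n u) - mon (neg_part n u)"

definition toric_ideal :: "nat \<Rightarrow> nat \<Rightarrow> (nat \<Rightarrow> nat \<Rightarrow> int) \<Rightarrow> 'a::field mpoly set" where
  "toric_ideal d n A = ideal_gen n (binom n ` int_kernel d n A)"

definition lex_less :: "monom \<Rightarrow> monom \<Rightarrow> bool" where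
  "lex_less u v \<longleftrightarrow> (\<exists>i. (\<forall>j<i. Poly_Mapping.lookup u j = Poly_Mapping.lookup v j) \<and> Poly_Mapping.lookup u i < Poly_Mapping.lookup v i)"

definition lead_mon :: "'a::field mpoly \<Rightarrow> monom" where
  "lead_mon p = (THE m. m \<in> Poly_Mapping.keys p \<and> (\<forall>m'\<in>Poly_Mapping.keys p. m' \<noteq> m \<longrightarrow> lex_less m' m))"

definition lead_coeff_mp :: "'a::field mpoly \<Rightarrow> 'a" where
  "lead_coeff_mp p = Poly_Mapping.lookup p (lead_mon p)"

definition mon_dvd :: "monom \<Rightarrow> monom \<Rightarrow> bool" where
  "mon_dvd m m' \<longleftrightarrow> (\<forall>i. Poly_Mapping.lookup m i \<le> Poly_Mapping.lookup m' i)"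

definition initial_ideal :: "nat \<Rightarrow> 'a::field mpoly set \<Rightarrow> 'a mpoly set" where
  "initial_ideal n I = ideal_gen n {mon (lead_mon f) | f. f \<in> I \<and> f \<noteq> 0}"

definition is_groebner_basis :: "nat \<Rightarrow> 'a::field mpoly set \<Rightarrow> 'a mpoly set \<Rightarrow> bool" where
  "is_groebner_basis n I G \<longleftrightarrow> finite G \<and> G \<subseteq> I \<and> 0 \<notin> G \<and>
     ideal_gen n {mon (lead_mon g) | g. g \<in> G} = initial_ideal n I"

definition is_reduced_groebner_basis :: "nat \<Rightarrow> 'a::field mpoly set \<Rightarrow> 'a mpoly set \<Rightarrow> bool" where
  "is_reduced_groebner_basis n I G \<longleftrightarrow> is_groebner_basis n I G \<and>
     (\<forall>g\<in>G. lead_coeff_mp g = 1) \<and>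
     (\<forall>g\<in>G. \<forall>g'\<in>G. g' \<noteq> g \<longrightarrow> (\<forall>m\<in>Poly_Mapping.keys g. \<not> mon_dvd (lead_mon g') m))"

text \<open>The matrix A_k of size (2k+1) x (4k+2), 0-indexed rows and columns.\<close>
definition A_mat :: "nat \<Rightarrow> nat \<Rightarrow> nat \<Rightarrow> int" where
  "A_mat k i j =
     (if j \<ge> 4*k+2 then 0
      else if i < k then (if j = i \<or> j = k + i then 1 else if j = 4*k then -1 else 0)
      else if i < 2*k then (if j = k + i \<or> j = 2*k + i then 1 else if j = 4*k+1 then -1 else 0)
      else if i = 2*k then (if j = 4*k \<or> j = 4*k+1 then 1 else 0)
      else 0)"

definition R0 :: "nat \<Rightarrow> nat \<Rightarrow> int" where
  "R0 k j = (if k \<le> j \<and> j < 2*k then 1 else if 3*k \<le> j \<and> j < 4*k then -1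
             else if j = 4*k then 1 else if j = 4*k+1 then -1 else 0)"

definition Ra :: "nat \<Rightarrow> nat \<Rightarrow> nat \<Rightarrow> int" where
  "Ra k i j = (if j = i then 1 else if j = k + i then -1 else 0)"

definition Rb :: "nat \<Rightarrow> nat \<Rightarrow> nat \<Rightarrow> int" where
  "Rb k i j = (if j = 2*k + i then 1 else if j = 3*k + i then -1 else 0)"

definition R_set :: "nat \<Rightarrow> (nat \<Rightarrow> int) set" where
  "R_set k = {R0 k} \<union> {Ra k i | i. i < k} \<union> {Rb k i | i. i < k}"

end

theory Submission
  imports Defs
begin


lemma lex_trans: "lex_less u v \<Longrightarrow> lex_less v w \<Longrightarrow> lex_less u w"
  unfolding lex_less_def
proof (elim exE conjE)
  fix i i' assume a: "\<forall>j<i. Poly_Mapping.lookup u j = Poly_Mapping.lookup v j" "Poly_Mapping.lookup u i < Poly_Mapping.lookup v i"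
    and b: "\<forall>j<i'. Poly_Mapping.lookup v j = Poly_Mapping.lookup w j" "Poly_Mapping.lookup v i' < Poly_Mapping.lookup w i'"
  show "\<exists>i. (\<forall>j<i. Poly_Mapping.lookup u j = Poly_Mapping.lookup w j) \<and> Poly_Mapping.lookup u i < Poly_Mapping.lookup w i"
  proof (cases "i < i'")
    case True then show ?thesis using a b by (intro exI[of _ i]) (auto dest: less_trans)
  next
    case False
    show ?thesis
    proof (cases "i = i'")
      case True then show ?thesis using a b by (intro exI[of _ i]) auto
    next
      case False
      with \<open>\<not> i < i'\<close> have "i' < i" by simp
      then show ?thesis using a b by (intro exI[of _ i']) auto
    qed
  qed
qed

lemma lex_irrefl: "\<not> lex_less u u"
  unfolding lex_less_def by auto

lemma lex_asym: "lex_less u v \<Longrightarrow> \<not> lex_less v u"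
  using lex_trans lex_irrefl by blast

lemma lex_total: "u \<noteq> v \<Longrightarrow> lex_less u v \<or> lex_less v u"
proof -
  assume "u \<noteq> v"
  have ex: "\<exists>i. Poly_Mapping.lookup u i \<noteq> Poly_Mapping.lookup v i"
  proof (rule ccontr)
    assume "\<not> ?thesis"
    then have "u = v" by (intro poly_mapping_eqI) simp
    then show False using \<open>u \<noteq> v\<close> by simp
  qed
  define i where "i = (LEAST i. Poly_Mapping.lookup u i \<noteq> Poly_Mapping.lookup v i)"
  have i1: "Poly_Mapping.lookup u i \<noteq> Poly_Mapping.lookup v i" unfolding i_def by (rule LeastI_ex[OF ex])
  have i2: "\<forall>j<i. Poly_Mapping.lookup u j = Poly_Mapping.lookup v j" 
  proof (intro allI impI)
    fix j assume "j < i"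
    then show "Poly_Mapping.lookup u j = Poly_Mapping.lookup v j" unfolding i_def by (rule not_less_Least[THEN notnotD])
  qed
  show ?thesis
  proof (cases "Poly_Mapping.lookup u i < Poly_Mapping.lookup v i")
    case True then have "lex_less u v" using i2 unfolding lex_less_def by (intro exI[of _ i]) simp
    then show ?thesis by simp
  next
    case False
    then have "Poly_Mapping.lookup v i < Poly_Mapping.lookup u i" using i1 by simp
    then have "lex_less v u" using i2 unfolding lex_less_def by (intro exI[of _ i]) simp
    then show ?thesis by simp
  qed
qed

lemma lex_max_exists:
  assumes "finite S" "S \<noteq> {}"
  shows "\<exists>m\<in>S. \<forall>m'\<in>S. m' \<noteq> m \<longrightarrow> lex_less m' m"
  using assms
proof (induction S rule: finite_ne_induct)
  case (singleton x) then show ?case by auto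
next
  case (insert x F)
  then obtain m where m: "m \<in> F" "\<forall>m'\<in>F. m' \<noteq> m \<longrightarrow> lex_less m' m" by blast
  show ?case
  proof (cases "lex_less m x")
    case True
    have "\<forall>m'\<in>insert x F. m' \<noteq> x \<longrightarrow> lex_less m' x"
    proof (intro ballI impI)
      fix m' assume "m' \<in> insert x F" "m' \<noteq> x"
      then have "m' \<in> F" by simp
      show "lex_less m' x"
      proof (cases "m' = m")
        case True then show ?thesis using \<open>lex_less m x\<close> by simp
      next
        case False then show ?thesis using m(2) \<open>m' \<in> F\<close> lex_trans[OF _ \<open>lex_less m x\<close>] by blast
      qed
    qed
    moreover have "x \<in> insert x F" by simp
    ultimately show ?thesis by blast
  next
    case False
    then have xm: "x \<noteq> m \<longrightarrow> lex_less x m" using lex_total[of x m] by blast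
    have "\<forall>m'\<in>insert x F. m' \<noteq> m \<longrightarrow> lex_less m' m"
      using xm m(2) by simp
    moreover have "m \<in> insert x F" using m(1) by simp
    ultimately show ?thesis by blast
  qed
qed

lemma lead_mon_prop:
  assumes "(f::'a::field mpoly) \<noteq> 0"
  shows "lead_mon f \<in> Poly_Mapping.keys f \<and> (\<forall>m'\<in>Poly_Mapping.keys f. m' \<noteq> lead_mon f \<longrightarrow> lex_less m' (lead_mon f))"
proof -
  have "Poly_Mapping.keys f \<noteq> {}" using assms by simp
  then obtain m where m: "m \<in> Poly_Mapping.keys f" "\<forall>m'\<in>Poly_Mapping.keys f. m' \<noteq> m \<longrightarrow> lex_less m' m"
    using lex_max_exists[of "Poly_Mapping.keys f"] by auto
  have "\<exists>!m. m \<in> Poly_Mapping.keys f \<and> (\<forall>m'\<in>Poly_Mapping.keys f. m' \<noteq> m \<longrightarrow> lex_less m' m)"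
  proof (rule ex1I[of _ m])
    show "m \<in> Poly_Mapping.keys f \<and> (\<forall>m'\<in>Poly_Mapping.keys f. m' \<noteq> m \<longrightarrow> lex_less m' m)" using m by blast
  next
    fix y assume y: "y \<in> Poly_Mapping.keys f \<and> (\<forall>m'\<in>Poly_Mapping.keys f. m' \<noteq> y \<longrightarrow> lex_less m' y)"
    show "y = m"
    proof (rule ccontr)
      assume "y \<noteq> m"
      then have "lex_less y m" "lex_less m y" using y m by auto
      then show False using lex_asym by blast
    qed
  qed
  then show ?thesis unfolding lead_mon_def by (rule theI')
qed

lemma lead_monI:
  assumes "m \<in> Poly_Mapping.keys (f::'a::field mpoly)" "\<forall>m'\<in>Poly_Mapping.keys f. m' \<noteq> m \<longrightarrow> lex_less m' m"
  shows "lead_mon f = m"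
proof -
  have "f \<noteq> 0" using assms by auto
  from lead_mon_prop[OF this] have l: "lead_mon f \<in> Poly_Mapping.keys f"
    "\<forall>m'\<in>Poly_Mapping.keys f. m' \<noteq> lead_mon f \<longrightarrow> lex_less m' (lead_mon f)" by auto
  show ?thesis
  proof (rule ccontr)
    assume "lead_mon f \<noteq> m"
    then have "lex_less (lead_mon f) m" "lex_less m (lead_mon f)" using l assms by auto
    then show False using lex_asym by blast
  qed
qed


lemma keys_plus_nat: "Poly_Mapping.keys ((a::monom) + b) = Poly_Mapping.keys a \<union> Poly_Mapping.keys b"
  by (auto simp: in_keys_iff lookup_add)

lemma polyring_mult: "p \<in> polyring n \<Longrightarrow> q \<in> polyring n \<Longrightarrow> p * q \<in> polyring n"
  unfolding polyring_def using keys_mult[of p q] by (fastforce simp: keys_plus_nat)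

lemma polyring_add: "p \<in> polyring n \<Longrightarrow> q \<in> polyring n \<Longrightarrow> p + q \<in> polyring n"
  unfolding polyring_def using keys_add[of p q] by blast

lemma polyring_diff: "p \<in> polyring n \<Longrightarrow> q \<in> polyring n \<Longrightarrow> (p::'a::field mpoly) - q \<in> polyring n"
  unfolding polyring_def using keys_diff[of p q] by blast

lemma mon_polyring: "Poly_Mapping.keys m \<subseteq> {..<n} \<Longrightarrow> (mon m :: 'a::field mpoly) \<in> polyring n"
  unfolding polyring_def mon_def by simp

lemma ideal_gen_polyring: "S \<subseteq> polyring n \<Longrightarrow> ideal_gen n S \<subseteq> polyring n"
proof
  fix p assume S: "S \<subseteq> polyring n" and p: "p \<in> ideal_gen n S"
  from p S show "p \<in> polyring n"
  proof (induction rule: ideal_gen.induct)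
    case zero then show ?case by (simp add: polyring_def)
  next
    case (gen s r) then show ?case using polyring_mult by blast
  next
    case (add p q) then show ?case using polyring_add by blast
  qed
qed

lemma ideal_gen_mult: "r \<in> polyring n \<Longrightarrow> p \<in> ideal_gen n S \<Longrightarrow> r * p \<in> ideal_gen n S"
proof -
  assume r: "r \<in> polyring n" and p: "p \<in> ideal_gen n S"
  from p show ?thesis
  proof (induction rule: ideal_gen.induct)
    case zero then show ?case by (simp add: ideal_gen.zero)
  next
    case (gen s r')
    then show ?case using ideal_gen.gen[of s S "r * r'" n] polyring_mult[OF r]
      by (simp add: mult.assoc)
  next
    case (add p q)
    then show ?case by (simp add: distrib_left ideal_gen.add)
  qed
qed

lemma ideal_gen_sub: "S \<subseteq> ideal_gen n T \<Longrightarrow> ideal_gen n S \<subseteq> ideal_gen n T"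
proof
  fix p assume S: "S \<subseteq> ideal_gen n T" and p: "p \<in> ideal_gen n S"
  from p S show "p \<in> ideal_gen n T"
    by (induction rule: ideal_gen.induct) (auto intro: ideal_gen.zero ideal_gen.add ideal_gen_mult)
qed

lemma ideal_gen_mono: "S \<subseteq> T \<Longrightarrow> ideal_gen n S \<subseteq> ideal_gen n T"
proof
  fix p assume S: "S \<subseteq> T" and p: "p \<in> ideal_gen n S"
  from p S show "p \<in> ideal_gen n T"
    by (induction rule: ideal_gen.induct) (auto intro: ideal_gen.zero ideal_gen.add ideal_gen.gen)
qed

lemma lookup_pos: "Poly_Mapping.lookup (pos_part n u) j = (if j < n then nat (u j) else 0)"
  unfolding pos_part_def by (simp add: lookup_sum lookup_single when_def)

lemma lookup_neg: "Poly_Mapping.lookup (neg_part n u) j = (if j < n then nat (- u j) else 0)"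
  unfolding neg_part_def by (simp add: lookup_sum lookup_single when_def)




definition Adeg :: "nat \<Rightarrow> nat \<Rightarrow> (nat \<Rightarrow> nat \<Rightarrow> int) \<Rightarrow> monom \<Rightarrow> nat \<Rightarrow> int" where
  "Adeg d n A m = (\<lambda>i. if i < d then (\<Sum>j<n. A i j * int (Poly_Mapping.lookup m j)) else 0)"

lemma Adeg_add_pt: "Adeg d n A (a + b) i = Adeg d n A a i + Adeg d n A b i"
  unfolding Adeg_def by (simp add: lookup_add sum.distrib algebra_simps)

lemma Adeg_shift: "Adeg d n A p = Adeg d n A q \<Longrightarrow> Adeg d n A (m + p) = Adeg d n A (m + q)"
  by (rule ext) (simp add: Adeg_add_pt fun_eq_iff)

lemma Adeg_pos_neg:
  assumes "u \<in> int_kernel d n A"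
  shows "Adeg d n A (pos_part n u) = Adeg d n A (neg_part n u)"
proof (rule ext)
  fix i
  show "Adeg d n A (pos_part n u) i = Adeg d n A (neg_part n u) i"
  proof (cases "i < d")
    case True
    have "(\<Sum>j<n. A i j * int (Poly_Mapping.lookup (pos_part n u) j)) - (\<Sum>j<n. A i j * int (Poly_Mapping.lookup (neg_part n u) j))
        = (\<Sum>j<n. A i j * int (Poly_Mapping.lookup (pos_part n u) j) - A i j * int (Poly_Mapping.lookup (neg_part n u) j))"
      by (simp add: sum_subtractf)
    also have "\<dots> = (\<Sum>j<n. A i j * u j)"
      by (rule sum.cong) (auto simp: lookup_pos lookup_neg algebra_simps[symmetric])
    also have "\<dots> = 0" using assms True unfolding int_kernel_def by auto
    finally show ?thesis unfolding Adeg_def using True by simp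
  next
    case False then show ?thesis unfolding Adeg_def by simp
  qed
qed

definition Lf :: "(monom \<Rightarrow> 'b) \<Rightarrow> 'b \<Rightarrow> 'a::field mpoly \<Rightarrow> 'a" where
  "Lf D v f = (\<Sum>m\<in>Poly_Mapping.keys f. if D m = v then Poly_Mapping.lookup f m else 0)"

lemma Lf_superset:
  assumes "finite T" "Poly_Mapping.keys f \<subseteq> T"
  shows "Lf D v f = (\<Sum>m\<in>T. if D m = v then Poly_Mapping.lookup f m else 0)"
  unfolding Lf_def
  by (rule sum.mono_neutral_left[OF assms(1) assms(2)]) (auto simp: in_keys_iff)

lemma Lf_add: "Lf D v (f + g) = Lf D v f + Lf D v g"
proof -
  let ?T = "Poly_Mapping.keys f \<union> Poly_Mapping.keys g"
  have "Lf D v (f + g) = (\<Sum>m\<in>?T. if D m = v then Poly_Mapping.lookup (f+g) m else 0)"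
    using keys_add[of f g] by (intro Lf_superset) auto
  also have "\<dots> = (\<Sum>m\<in>?T. (if D m = v then Poly_Mapping.lookup f m else 0) + (if D m = v then Poly_Mapping.lookup g m else 0))"
    by (rule sum.cong) (auto simp: lookup_add)
  also have "\<dots> = Lf D v f + Lf D v g"
    by (simp add: sum.distrib Lf_superset[symmetric])
  finally show ?thesis .
qed

lemma Lf_diff: "Lf D v (f - g) = Lf D v f - Lf D v (g::'a::field mpoly)"
proof -
  let ?T = "Poly_Mapping.keys f \<union> Poly_Mapping.keys g"
  have "Lf D v (f - g) = (\<Sum>m\<in>?T. if D m = v then Poly_Mapping.lookup (f-g) m else 0)"
    using keys_diff[of f g] by (intro Lf_superset) auto
  also have "\<dots> = (\<Sum>m\<in>?T. (if D m = v then Poly_Mapping.lookup f m else 0) - (if D m = v then Poly_Mapping.lookup g m else 0))"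
    by (rule sum.cong) (auto simp: lookup_minus)
  also have "\<dots> = Lf D v f - Lf D v g"
    by (simp add: sum_subtractf Lf_superset[symmetric])
  finally show ?thesis .
qed

lemma Lf_zero: "Lf D v 0 = 0"
  unfolding Lf_def by simp

lemma Lf_sum: "finite I \<Longrightarrow> Lf D v (\<Sum>i\<in>I. F i) = (\<Sum>i\<in>I. Lf D v (F i))"
  by (induction I rule: finite_induct) (simp_all add: Lf_zero Lf_add)

lemma Lf_single: "Lf D v (Poly_Mapping.single m c :: 'a::field mpoly) = (if D m = v then c else 0)"
  unfolding Lf_def by simp

lemma mpoly_expand: "(r::'a::field mpoly) = (\<Sum>m\<in>Poly_Mapping.keys r. Poly_Mapping.single m (Poly_Mapping.lookup r m))"
proof (rule poly_mapping_eqI)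
  fix x
  have "Poly_Mapping.lookup (\<Sum>m\<in>Poly_Mapping.keys r. Poly_Mapping.single m (Poly_Mapping.lookup r m)) x
      = (\<Sum>m\<in>Poly_Mapping.keys r. if m = x then Poly_Mapping.lookup r m else 0)"
    by (simp add: lookup_sum lookup_single when_def)
  also have "\<dots> = Poly_Mapping.lookup r x"
    by (simp add: sum.delta' in_keys_iff)
  finally show "Poly_Mapping.lookup r x = Poly_Mapping.lookup (\<Sum>m\<in>Poly_Mapping.keys r. Poly_Mapping.single m (Poly_Mapping.lookup r m)) x" by simp
qed

lemma Lf_gen:
  assumes "\<And>m. D (m + p) = D (m + q)"
  shows "Lf D v ((r::'a::field mpoly) * (mon p - mon q)) = 0"
proof -
  have "r * (mon p - mon q) = (\<Sum>m\<in>Poly_Mapping.keys r. Poly_Mapping.single m (Poly_Mapping.lookup r m)) * (mon p - mon q)"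
    by (subst mpoly_expand[of r]) simp
  also have "\<dots> = (\<Sum>m\<in>Poly_Mapping.keys r. Poly_Mapping.single (m + p) (Poly_Mapping.lookup r m) - Poly_Mapping.single (m + q) (Poly_Mapping.lookup r m))"
    by (simp add: sum_distrib_right right_diff_distrib mon_def mult_single sum_subtractf)
  finally have e: "r * (mon p - mon q) = \<dots>" .
  show ?thesis unfolding e
    by (simp add: Lf_sum Lf_diff Lf_single assms)
qed

lemma toric_Lf:
  assumes "f \<in> toric_ideal d n A"
  shows "Lf (Adeg d n A) v (f::'a::field mpoly) = 0"
  using assms unfolding toric_ideal_def
proof (induction rule: ideal_gen.induct)
  case zero then show ?case by (simp add: Lf_zero)
next
  case (gen s r)
  then obtain u where u: "u \<in> int_kernel d n A" "s = binom n u" by blast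
  show ?case unfolding u(2) binom_def
    by (rule Lf_gen) (rule Adeg_shift[OF Adeg_pos_neg[OF u(1)]])
next
  case (add p q) then show ?case by (simp add: Lf_add)
qed




lemma row_a:
  assumes "i < k"
  shows "(\<Sum>j<4*k+2. A_mat k i j * x j) = x i + x (k+i) - x (4*k)"
proof -
  have "(\<Sum>j<4*k+2. A_mat k i j * x j) = (\<Sum>j<4*k+2. (if j = i then x j else 0) + (if j = k+i then x j else 0) - (if j = 4*k then x j else 0))"
    by (rule sum.cong) (use assms in \<open>auto simp: A_mat_def\<close>)
  also have "\<dots> = x i + x (k+i) - x (4*k)"
    using assms by (simp add: sum.distrib sum_subtractf)
  finally show ?thesis .
qed

lemma row_c:
  assumes "i < k"
  shows "(\<Sum>j<4*k+2. A_mat k (k+i) j * x j) = x (2*k+i) + x (3*k+i) - x (4*k+1)"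
proof -
  have "(\<Sum>j<4*k+2. A_mat k (k+i) j * x j) = (\<Sum>j<4*k+2. (if j = 2*k+i then x j else 0) + (if j = 3*k+i then x j else 0) - (if j = 4*k+1 then x j else 0))"
    by (rule sum.cong) (use assms in \<open>auto simp: A_mat_def\<close>)
  also have "\<dots> = x (2*k+i) + x (3*k+i) - x (4*k+1)"
    using assms by (simp add: sum.distrib sum_subtractf)
  finally show ?thesis .
qed

lemma row_s:
  shows "(\<Sum>j<4*k+2. A_mat k (2*k) j * x j) = x (4*k) + x (4*k+1)"
proof -
  have "(\<Sum>j<4*k+2. A_mat k (2*k) j * x j) = (\<Sum>j<4*k+2. (if j = 4*k then x j else 0) + (if j = 4*k+1 then x j else 0))"
    by (rule sum.cong) (auto simp: A_mat_def)
  also have "\<dots> = x (4*k) + x (4*k+1)"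
    by (simp add: sum.distrib)
  finally show ?thesis .
qed

lemma kernel_rows:
  assumes "\<forall>j\<ge>4*k+2. x j = 0"
    and "\<And>i. i < k \<Longrightarrow> x i + x (k+i) - x (4*k) = 0"
    and "\<And>i. i < k \<Longrightarrow> x (2*k+i) + x (3*k+i) - x (4*k+1) = 0"
    and "x (4*k) + x (4*k+1) = 0"
  shows "x \<in> int_kernel (2*k+1) (4*k+2) (A_mat k)"
  unfolding int_kernel_def
proof (intro CollectI conjI allI impI)
  fix j assume "4*k+2 \<le> j" then show "x j = 0" using assms(1) by simp
next
  fix i assume i: "i < 2*k+1"
  show "(\<Sum>j<4*k+2. A_mat k i j * x j) = 0"
  proof (cases "i < k")
    case True then show ?thesis using row_a[OF True] assms(2)[OF True] by simp
  next
    case False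
    show ?thesis
    proof (cases "i < 2*k")
      case True
      then obtain i' where i': "i = k + i'" "i' < k" using False by (metis add_diff_inverse_nat add_less_imp_less_left mult_2)
      then show ?thesis using row_c[OF i'(2)] assms(3)[OF i'(2)] by simp
    next
      case False
      then have "i = 2*k" using i by simp
      then show ?thesis using row_s assms(4) by simp
    qed
  qed
qed

lemma R0_kernel: "k \<ge> 1 \<Longrightarrow> R0 k \<in> int_kernel (2*k+1) (4*k+2) (A_mat k)"
  by (rule kernel_rows) (auto simp: R0_def)

lemma Ra_kernel: "i0 < k \<Longrightarrow> Ra k i0 \<in> int_kernel (2*k+1) (4*k+2) (A_mat k)"
  by (rule kernel_rows) (auto simp: Ra_def)

lemma Rb_kernel: "i0 < k \<Longrightarrow> Rb k i0 \<in> int_kernel (2*k+1) (4*k+2) (A_mat k)"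
  by (rule kernel_rows) (auto simp: Rb_def)

lemma Ra_pos: "i < k \<Longrightarrow> pos_part (4*k+2) (Ra k i) = Poly_Mapping.single i 1"
  by (rule poly_mapping_eqI) (auto simp: lookup_pos lookup_single when_def Ra_def)

lemma Ra_neg: "i < k \<Longrightarrow> neg_part (4*k+2) (Ra k i) = Poly_Mapping.single (k+i) 1"
  by (rule poly_mapping_eqI) (auto simp: lookup_neg lookup_single when_def Ra_def)

lemma Rb_pos: "i < k \<Longrightarrow> pos_part (4*k+2) (Rb k i) = Poly_Mapping.single (2*k+i) 1"
  by (rule poly_mapping_eqI) (auto simp: lookup_pos lookup_single when_def Rb_def)

lemma Rb_neg: "i < k \<Longrightarrow> neg_part (4*k+2) (Rb k i) = Poly_Mapping.single (3*k+i) 1"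
  by (rule poly_mapping_eqI) (auto simp: lookup_neg lookup_single when_def Rb_def)

lemma R0_pos_lookup: "Poly_Mapping.lookup (pos_part (4*k+2) (R0 k)) j = (if (k \<le> j \<and> j < 2*k) \<or> j = 4*k then 1 else 0)"
  by (auto simp: lookup_pos R0_def)

lemma R0_neg_lookup: "Poly_Mapping.lookup (neg_part (4*k+2) (R0 k)) j = (if (3*k \<le> j \<and> j < 4*k) \<or> j = 4*k+1 then 1 else 0)"
  by (auto simp: lookup_neg R0_def)

lemma binom_lead:
  assumes "p \<noteq> q" "lex_less q p"
  shows "Poly_Mapping.keys (mon p - mon q :: 'a::field mpoly) = {p, q}"
    "lead_mon (mon p - mon q :: 'a::field mpoly) = p"
    "Poly_Mapping.lookup (mon p - mon q :: 'a::field mpoly) p = 1"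
proof -
  have l: "Poly_Mapping.lookup (mon p - mon q :: 'a::field mpoly) x = (if x = p then 1 else if x = q then -1 else 0)" for x
    using assms(1) by (auto simp: mon_def lookup_minus lookup_single when_def)
  show k: "Poly_Mapping.keys (mon p - mon q :: 'a::field mpoly) = {p, q}"
    by (auto simp: in_keys_iff l split: if_splits)
  show "lead_mon (mon p - mon q :: 'a::field mpoly) = p"
    by (rule lead_monI) (use assms in \<open>auto simp: k\<close>)
  show "Poly_Mapping.lookup (mon p - mon q :: 'a::field mpoly) p = 1" by (simp add: l)
qed




lemma comb:
  fixes x y :: "nat \<Rightarrow> nat" and k :: nat
  assumes k: "k \<ge> 1"
    and rowa: "\<And>i. i < k \<Longrightarrow> x i + x (k+i) + y (4*k) = y i + y (k+i) + x (4*k)"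
    and rowc: "\<And>i. i < k \<Longrightarrow> x (2*k+i) + x (3*k+i) + y (4*k+1) = y (2*k+i) + y (3*k+i) + x (4*k+1)"
    and rows: "x (4*k) + x (4*k+1) = y (4*k) + y (4*k+1)"
    and xa: "\<And>i. i < k \<Longrightarrow> x i = 0"
    and xc: "\<And>i. i < k \<Longrightarrow> x (2*k+i) = 0"
    and std: "(\<exists>i<k. x (k+i) = 0) \<or> x (4*k) = 0"
    and supp: "\<And>j. j \<ge> 4*k+2 \<Longrightarrow> x j = 0 \<and> y j = 0"
    and ne: "\<exists>j. x j \<noteq> y j"
  shows "\<exists>i. (\<forall>j<i. x j = y j) \<and> x i < y i"
proof (cases "\<exists>i<k. y i \<noteq> 0")
  case True
  define i0 where "i0 = (LEAST i. i < k \<and> y i \<noteq> 0)"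
  have i0: "i0 < k \<and> y i0 \<noteq> 0" unfolding i0_def using True by (rule LeastI_ex)
  have below: "\<not> (j < k \<and> y j \<noteq> 0)" if "j < i0" for j
    using that unfolding i0_def by (rule not_less_Least)
  show ?thesis
  proof (intro exI[of _ i0] conjI allI impI)
    fix j assume "j < i0"
    then have "j < k" using i0 by simp
    then show "x j = y j" using below[OF \<open>j < i0\<close>] xa by simp
  next
    show "x i0 < y i0" using i0 xa by simp
  qed
next
  case False
  then have ya: "\<And>i. i < k \<Longrightarrow> y i = 0" by blast
  have s: "x (4*k) \<le> y (4*k)"
  proof (rule ccontr)
    assume c: "\<not> x (4*k) \<le> y (4*k)"
    then have "x (4*k) \<noteq> 0" by simp
    with std obtain i where i: "i < k" "x (k+i) = 0" by blast
    from rowa[OF i(1)] i xa[OF i(1)] ya[OF i(1)] c show False by simp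
  qed
  show ?thesis
  proof (cases "x (4*k) < y (4*k)")
    case True
    have "x k < y k" using rowa[of 0] k xa[of 0] ya[of 0] True by simp
    moreover have "\<forall>j<k. x j = y j" using xa ya by simp
    ultimately show ?thesis by blast
  next
    case False
    then have e4: "x (4*k) = y (4*k)" using s by simp
    have eb: "\<And>i. i < k \<Longrightarrow> x (k+i) = y (k+i)" using rowa xa ya e4 by fastforce
    have e5: "x (4*k+1) = y (4*k+1)" using rows e4 by simp
    show ?thesis
    proof (cases "\<exists>i<k. y (2*k+i) \<noteq> 0")
      case True
      define i0 where "i0 = (LEAST i. i < k \<and> y (2*k+i) \<noteq> 0)"
      have i0: "i0 < k \<and> y (2*k+i0) \<noteq> 0" unfolding i0_def using True by (rule LeastI_ex)
      have below: "\<not> (j < k \<and> y (2*k+j) \<noteq> 0)" if "j < i0" for j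
        using that unfolding i0_def by (rule not_less_Least)
      show ?thesis
      proof (intro exI[of _ "2*k+i0"] conjI allI impI)
        fix j assume j: "j < 2*k+i0"
        show "x j = y j"
        proof (cases "j < k")
          case True then show ?thesis using xa ya by simp
        next
          case False
          show ?thesis
          proof (cases "j < 2*k")
            case True
            then have "j = k + (j - k)" "j - k < k" using False by auto
            then show ?thesis using eb by metis
          next
            case False
            then have "j = 2*k + (j - 2*k)" "j - 2*k < i0" using j by auto
            moreover have "j - 2*k < k" using \<open>j - 2*k < i0\<close> i0 by simp
            ultimately show ?thesis using below[of "j - 2*k"] xc[of "j - 2*k"] by metis
          qed
        qed
      next
        show "x (2*k+i0) < y (2*k+i0)" using i0 xc by simp
      qed
    next
      case False
      then have yc: "\<And>i. i < k \<Longrightarrow> y (2*k+i) = 0" by blast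
      have ed: "\<And>i. i < k \<Longrightarrow> x (3*k+i) = y (3*k+i)" using rowc xc yc e5 by fastforce
      have "x j = y j" for j
      proof -
        consider "j < k" | "k \<le> j \<and> j < 2*k" | "2*k \<le> j \<and> j < 3*k" | "3*k \<le> j \<and> j < 4*k"
          | "j = 4*k" | "j = 4*k+1" | "j \<ge> 4*k+2" by linarith
        then show ?thesis
        proof cases
          case 1 then show ?thesis using xa ya by simp
        next
          case 2 then have "j = k + (j - k)" "j - k < k" by auto
          then show ?thesis using eb by metis
        next
          case 3 then have "j = 2*k + (j - 2*k)" "j - 2*k < k" by auto
          then show ?thesis using xc yc by metis
        next
          case 4 then have "j = 3*k + (j - 3*k)" "j - 3*k < k" by auto
          then show ?thesis using ed by metis
        next
          case 5 then show ?thesis using e4 by simp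
        next
          case 6 then show ?thesis using e5 by simp
        next
          case 7 then show ?thesis using supp by simp
        qed
      qed
      then show ?thesis using ne by blast
    qed
  qed
qed




lemma one_polyring: "(1::'a::field mpoly) \<in> polyring n"
  unfolding polyring_def by simp

lemma keys_pos_sub: "Poly_Mapping.keys (pos_part n u) \<subseteq> {..<n}"
  by (auto simp: in_keys_iff lookup_pos split: if_splits)

lemma keys_neg_sub: "Poly_Mapping.keys (neg_part n u) \<subseteq> {..<n}"
  by (auto simp: in_keys_iff lookup_neg split: if_splits)

lemma binom_polyring: "(binom n u :: 'a::field mpoly) \<in> polyring n"
  unfolding binom_def by (intro polyring_diff mon_polyring keys_pos_sub keys_neg_sub)

lemma toric_polyring: "toric_ideal d n A \<subseteq> (polyring n :: 'a::field mpoly set)"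
  unfolding toric_ideal_def by (rule ideal_gen_polyring) (auto intro: binom_polyring)

lemma binom_in_toric: "u \<in> int_kernel d n A \<Longrightarrow> (binom n u :: 'a::field mpoly) \<in> toric_ideal d n A"
  unfolding toric_ideal_def using ideal_gen.gen[of "binom n u" "binom n ` int_kernel d n A" 1 n]
  by (simp add: one_polyring)

lemma mon_factor:
  assumes "mon_dvd a b" "Poly_Mapping.keys b \<subseteq> {..<n}" "(mon a :: 'a::field mpoly) \<in> S"
  shows "(mon b :: 'a::field mpoly) \<in> ideal_gen n S"
proof -
  have e: "b = (b - a) + a"
    by (rule poly_mapping_eqI) (use assms(1) in \<open>auto simp: lookup_add lookup_minus mon_dvd_def\<close>)
  have "(mon b :: 'a mpoly) = mon (b - a) * mon a"
    unfolding mon_def mult_single by (subst e) simp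
  moreover have "Poly_Mapping.keys (b - a) \<subseteq> Poly_Mapping.keys b"
    by (auto simp: in_keys_iff lookup_minus)
  then have "Poly_Mapping.keys (b - a) \<subseteq> {..<n}" using assms(2) by blast
  then have "(mon (b - a) :: 'a mpoly) \<in> polyring n" by (rule mon_polyring)
  ultimately show ?thesis using ideal_gen.gen[OF assms(3)] by simp
qed

lemma mon_dvd_single: "mon_dvd (Poly_Mapping.single p 1) m \<Longrightarrow> 1 \<le> Poly_Mapping.lookup m p"
  unfolding mon_dvd_def by (metis lookup_single_eq)

lemma single_dvd: "1 \<le> Poly_Mapping.lookup m p \<Longrightarrow> mon_dvd (Poly_Mapping.single p 1) m"
  unfolding mon_dvd_def by (auto simp: lookup_single when_def)

context
  fixes k :: nat
  assumes k: "k \<ge> 1"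
begin

abbreviation "P0 \<equiv> pos_part (4*k+2) (R0 k)"
abbreviation "N0 \<equiv> neg_part (4*k+2) (R0 k)"

lemma P0N0: "P0 \<noteq> N0" "lex_less N0 P0"
proof -
  have a: "Poly_Mapping.lookup P0 k = 1" "Poly_Mapping.lookup N0 k = 0"
    using R0_pos_lookup[of k k] R0_neg_lookup[of k k] k by auto
  then show "P0 \<noteq> N0" by auto
  show "lex_less N0 P0" unfolding lex_less_def
  proof (rule exI[of _ k], intro conjI allI impI)
    fix j assume "j < k"
    then show "Poly_Mapping.lookup N0 j = Poly_Mapping.lookup P0 j"
      using R0_pos_lookup[of k j] R0_neg_lookup[of k j] by auto
  next
    show "Poly_Mapping.lookup N0 k < Poly_Mapping.lookup P0 k" using a by simp
  qed
qed

lemma single_lex: "i < j \<Longrightarrow> lex_less (Poly_Mapping.single j 1) (Poly_Mapping.single i 1)"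
  unfolding lex_less_def by (rule exI[of _ i]) (auto simp: lookup_single when_def)

lemma single_ne: "i \<noteq> j \<Longrightarrow> Poly_Mapping.single j (1::nat) \<noteq> Poly_Mapping.single i 1"
proof
  assume i: "i \<noteq> j" and e: "Poly_Mapping.single j (1::nat) = Poly_Mapping.single i 1"
  have "Poly_Mapping.lookup (Poly_Mapping.single j (1::nat)) j = Poly_Mapping.lookup (Poly_Mapping.single i 1) j"
    by (simp only: e)
  then show False using i by (simp add: lookup_single_not_eq)
qed

lemma G_elem:
  assumes "g \<in> binom (4*k+2) ` R_set k"
  shows "(g::'a::field mpoly) = mon P0 - mon N0 \<or>
         (\<exists>i<k. g = mon (Poly_Mapping.single i 1) - mon (Poly_Mapping.single (k+i) 1)) \<or>
         (\<exists>i<k. g = mon (Poly_Mapping.single (2*k+i) 1) - mon (Poly_Mapping.single (3*k+i) 1))"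
proof -
  obtain u where u: "u \<in> R_set k" "g = binom (4*k+2) u" using assms by blast
  then consider "u = R0 k" | i where "i < k" "u = Ra k i" | i where "i < k" "u = Rb k i"
    unfolding R_set_def by blast
  then show ?thesis
  proof cases
    case 1 then show ?thesis using u by (simp add: binom_def)
  next
    case (2 i)
    have "g = mon (Poly_Mapping.single i 1) - mon (Poly_Mapping.single (k+i) 1)"
      unfolding u(2) 2(2) binom_def Ra_pos[OF 2(1)] Ra_neg[OF 2(1)] ..
    then show ?thesis using 2(1) by blast
  next
    case (3 i)
    have "g = mon (Poly_Mapping.single (2*k+i) 1) - mon (Poly_Mapping.single (3*k+i) 1)"
      unfolding u(2) 3(2) binom_def Rb_pos[OF 3(1)] Rb_neg[OF 3(1)] ..
    then show ?thesis using 3(1) by blast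
  qed
qed

lemma G_kernel: "u \<in> R_set k \<Longrightarrow> u \<in> int_kernel (2*k+1) (4*k+2) (A_mat k)"
  unfolding R_set_def using R0_kernel[OF k] Ra_kernel Rb_kernel by auto

lemma G_lead:
  "lead_mon (mon P0 - mon N0 :: 'a::field mpoly) = P0"
  "Poly_Mapping.keys (mon P0 - mon N0 :: 'a::field mpoly) = {P0, N0}"
  "Poly_Mapping.lookup (mon P0 - mon N0 :: 'a::field mpoly) P0 = 1"
  "i < k \<Longrightarrow> lead_mon (mon (Poly_Mapping.single i 1) - mon (Poly_Mapping.single (k+i) 1) :: 'a::field mpoly) = Poly_Mapping.single i 1"
  "i < k \<Longrightarrow> Poly_Mapping.keys (mon (Poly_Mapping.single i 1) - mon (Poly_Mapping.single (k+i) 1) :: 'a::field mpoly) = {Poly_Mapping.single i 1, Poly_Mapping.single (k+i) 1}"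
  "i < k \<Longrightarrow> Poly_Mapping.lookup (mon (Poly_Mapping.single i 1) - mon (Poly_Mapping.single (k+i) 1) :: 'a::field mpoly) (Poly_Mapping.single i 1) = 1"
  "i < k \<Longrightarrow> lead_mon (mon (Poly_Mapping.single (2*k+i) 1) - mon (Poly_Mapping.single (3*k+i) 1) :: 'a::field mpoly) = Poly_Mapping.single (2*k+i) 1"
  "i < k \<Longrightarrow> Poly_Mapping.keys (mon (Poly_Mapping.single (2*k+i) 1) - mon (Poly_Mapping.single (3*k+i) 1) :: 'a::field mpoly) = {Poly_Mapping.single (2*k+i) 1, Poly_Mapping.single (3*k+i) 1}"
  "i < k \<Longrightarrow> Poly_Mapping.lookup (mon (Poly_Mapping.single (2*k+i) 1) - mon (Poly_Mapping.single (3*k+i) 1) :: 'a::field mpoly) (Poly_Mapping.single (2*k+i) 1) = 1"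
  using binom_lead[OF P0N0] 
    binom_lead[OF single_ne[of "k+i" i] single_lex[of i "k+i"]]
    binom_lead[OF single_ne[of "3*k+i" "2*k+i"] single_lex[of "2*k+i" "3*k+i"]] k
  by auto


lemma key:
  assumes f: "f \<in> toric_ideal (2*k+1) (4*k+2) (A_mat k)" "(f::'a::field mpoly) \<noteq> 0"
  shows "(\<exists>i<k. 1 \<le> Poly_Mapping.lookup (lead_mon f) i) \<or>
         (\<exists>i<k. 1 \<le> Poly_Mapping.lookup (lead_mon f) (2*k+i)) \<or>
         ((\<forall>i<k. 1 \<le> Poly_Mapping.lookup (lead_mon f) (k+i)) \<and> 1 \<le> Poly_Mapping.lookup (lead_mon f) (4*k))"
proof (rule ccontr)
  assume c: "\<not> ?thesis"
  define m where "m = lead_mon f"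
  define D where "D = Adeg (2*k+1) (4*k+2) (A_mat k)"
  have mk: "m \<in> Poly_Mapping.keys f" and mmax: "\<forall>m'\<in>Poly_Mapping.keys f. m' \<noteq> m \<longrightarrow> lex_less m' m"
    using lead_mon_prop[OF f(2)] unfolding m_def by auto
  have fp: "f \<in> polyring (4*k+2)" using toric_polyring f(1) by blast
  then have supp: "\<And>m' j. m' \<in> Poly_Mapping.keys f \<Longrightarrow> j \<ge> 4*k+2 \<Longrightarrow> Poly_Mapping.lookup m' j = 0"
    unfolding polyring_def by (force simp: in_keys_iff)
  have L0: "Lf D (D m) f = 0" unfolding D_def by (rule toric_Lf[OF f(1)])
  have "\<exists>m'\<in>Poly_Mapping.keys f. m' \<noteq> m \<and> D m' = D m"
  proof (rule ccontr)
    assume "\<not> ?thesis"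
    then have "Lf D (D m) f = (\<Sum>m'\<in>Poly_Mapping.keys f. if m' = m then Poly_Mapping.lookup f m' else 0)"
      unfolding Lf_def by (intro sum.cong) auto
    also have "\<dots> = Poly_Mapping.lookup f m" using mk by simp
    finally show False using L0 mk by (simp add: in_keys_iff)
  qed
  then obtain m' where m': "m' \<in> Poly_Mapping.keys f" "m' \<noteq> m" "D m' = D m" by blast
  have lt: "lex_less m' m" using mmax m' by blast
  define x where "x = Poly_Mapping.lookup m"
  define y where "y = Poly_Mapping.lookup m'"
  have rowsum: "(\<Sum>j<4*k+2. A_mat k i j * int (x j)) = (\<Sum>j<4*k+2. A_mat k i j * int (y j))" if "i < 2*k+1" for i
  proof -
    have "D m i = D m' i" using m'(3) by simp
    then show ?thesis using that unfolding D_def Adeg_def x_def y_def by simp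
  qed
  have "\<exists>i. (\<forall>j<i. x j = y j) \<and> x i < y i"
  proof (rule comb[OF k])
    fix i assume i: "i < k"
    have "int (x i) + int (x (k+i)) - int (x (4*k)) = int (y i) + int (y (k+i)) - int (y (4*k))"
      using rowsum[of i] i row_a[OF i, of "\<lambda>j. int (x j)"] row_a[OF i, of "\<lambda>j. int (y j)"] by simp
    then show "x i + x (k+i) + y (4*k) = y i + y (k+i) + x (4*k)" by linarith
  next
    fix i assume i: "i < k"
    have "int (x (2*k+i)) + int (x (3*k+i)) - int (x (4*k+1)) = int (y (2*k+i)) + int (y (3*k+i)) - int (y (4*k+1))"
      using rowsum[of "k+i"] i row_c[OF i, of "\<lambda>j. int (x j)"] row_c[OF i, of "\<lambda>j. int (y j)"] by simp
    then show "x (2*k+i) + x (3*k+i) + y (4*k+1) = y (2*k+i) + y (3*k+i) + x (4*k+1)" by linarith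
  next
    have "int (x (4*k)) + int (x (4*k+1)) = int (y (4*k)) + int (y (4*k+1))"
      using rowsum[of "2*k"] row_s[of k "\<lambda>j. int (x j)"] row_s[of k "\<lambda>j. int (y j)"] by simp
    then show "x (4*k) + x (4*k+1) = y (4*k) + y (4*k+1)" by linarith
  next
    fix i assume "i < k" then show "x i = 0" using c unfolding x_def m_def by force
  next
    fix i assume "i < k" then show "x (2*k+i) = 0" using c unfolding x_def m_def by force
  next
    show "(\<exists>i<k. x (k+i) = 0) \<or> x (4*k) = 0" using c unfolding x_def m_def by force
  next
    fix j :: nat assume "j \<ge> 4*k+2"
    then show "x j = 0 \<and> y j = 0" using supp[OF mk] supp[OF m'(1)] unfolding x_def y_def by simp
  next
    have "m \<noteq> m'" using m'(2) by simp
    then show "\<exists>j. x j \<noteq> y j" unfolding x_def y_def using poly_mapping_eqI by metis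
  qed
  then have "lex_less m m'" unfolding lex_less_def x_def y_def .
  then show False using lt lex_asym by blast
qed

lemma LA:
  assumes "i' < k" "g \<in> binom (4*k+2) ` R_set k" "m \<in> Poly_Mapping.keys (g::'a::field mpoly)"
    "1 \<le> Poly_Mapping.lookup m i'"
  shows "g = mon (Poly_Mapping.single i' 1) - mon (Poly_Mapping.single (k+i') 1)"
  using G_elem[OF assms(2)]
proof (elim disjE exE conjE)
  assume "g = mon P0 - mon N0"
  then have "m = P0 \<or> m = N0" using assms(3) G_lead(2) by blast
  then show ?thesis using assms(1) assms(4) R0_pos_lookup[of k "i'"] R0_neg_lookup[of k "i'"] by auto
next
  fix i assume i: "i < k" "g = mon (Poly_Mapping.single i 1) - mon (Poly_Mapping.single (k+i) 1)"
  have "m \<in> {Poly_Mapping.single i 1, Poly_Mapping.single (k+i) 1}" using assms(3) unfolding i(2) G_lead(5)[OF i(1)] .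
  then show ?thesis using i assms(1) assms(4) by (auto simp: lookup_single when_def split: if_splits)
next
  fix i assume i: "i < k" "g = mon (Poly_Mapping.single (2*k+i) 1) - mon (Poly_Mapping.single (3*k+i) 1)"
  have "m \<in> {Poly_Mapping.single (2*k+i) 1, Poly_Mapping.single (3*k+i) 1}" using assms(3) unfolding i(2) G_lead(8)[OF i(1)] .
  then show ?thesis using i assms(1) assms(4) by (auto simp: lookup_single when_def split: if_splits)
qed

lemma LB:
  assumes "i' < k" "g \<in> binom (4*k+2) ` R_set k" "m \<in> Poly_Mapping.keys (g::'a::field mpoly)"
    "1 \<le> Poly_Mapping.lookup m (2*k+i')"
  shows "g = mon (Poly_Mapping.single (2*k+i') 1) - mon (Poly_Mapping.single (3*k+i') 1)"
  using G_elem[OF assms(2)]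
proof (elim disjE exE conjE)
  assume "g = mon P0 - mon N0"
  then have "m = P0 \<or> m = N0" using assms(3) G_lead(2) by blast
  then show ?thesis using assms(1) assms(4) R0_pos_lookup[of k "2*k+i'"] R0_neg_lookup[of k "2*k+i'"] by auto
next
  fix i assume i: "i < k" "g = mon (Poly_Mapping.single i 1) - mon (Poly_Mapping.single (k+i) 1)"
  have "m \<in> {Poly_Mapping.single i 1, Poly_Mapping.single (k+i) 1}" using assms(3) unfolding i(2) G_lead(5)[OF i(1)] .
  then show ?thesis using i assms(1) assms(4) by (auto simp: lookup_single when_def split: if_splits)
next
  fix i assume i: "i < k" "g = mon (Poly_Mapping.single (2*k+i) 1) - mon (Poly_Mapping.single (3*k+i) 1)"
  have "m \<in> {Poly_Mapping.single (2*k+i) 1, Poly_Mapping.single (3*k+i) 1}" using assms(3) unfolding i(2) G_lead(8)[OF i(1)] .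
  then show ?thesis using i assms(1) assms(4) by (auto simp: lookup_single when_def split: if_splits)
qed

lemma LC:
  assumes "g \<in> binom (4*k+2) ` R_set k" "m \<in> Poly_Mapping.keys (g::'a::field mpoly)"
    "1 \<le> Poly_Mapping.lookup m (4*k)"
  shows "g = mon P0 - mon N0"
  using G_elem[OF assms(1)]
proof (elim disjE exE conjE)
  assume "g = mon P0 - mon N0"
  then show ?thesis .
next
  fix i assume i: "i < k" "g = mon (Poly_Mapping.single i 1) - mon (Poly_Mapping.single (k+i) 1)"
  have "m \<in> {Poly_Mapping.single i 1, Poly_Mapping.single (k+i) 1}" using assms(2) unfolding i(2) G_lead(5)[OF i(1)] .
  then show ?thesis using i assms(3) by (auto simp: lookup_single when_def split: if_splits)
next
  fix i assume i: "i < k" "g = mon (Poly_Mapping.single (2*k+i) 1) - mon (Poly_Mapping.single (3*k+i) 1)"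
  have "m \<in> {Poly_Mapping.single (2*k+i) 1, Poly_Mapping.single (3*k+i) 1}" using assms(2) unfolding i(2) G_lead(8)[OF i(1)] .
  then show ?thesis using i assms(3) by (auto simp: lookup_single when_def split: if_splits)
qed

lemma P0_dvd: "mon_dvd P0 m \<Longrightarrow> 1 \<le> Poly_Mapping.lookup m (4*k)"
  unfolding mon_dvd_def using R0_pos_lookup[of k "4*k"] by (metis order_refl)

lemma G_in:
  "(mon P0 - mon N0 :: 'a::field mpoly) \<in> binom (4*k+2) ` R_set k"
  "i < k \<Longrightarrow> (mon (Poly_Mapping.single i 1) - mon (Poly_Mapping.single (k+i) 1) :: 'a::field mpoly) \<in> binom (4*k+2) ` R_set k"
  "i < k \<Longrightarrow> (mon (Poly_Mapping.single (2*k+i) 1) - mon (Poly_Mapping.single (3*k+i) 1) :: 'a::field mpoly) \<in> binom (4*k+2) ` R_set k"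
proof -
  show "(mon P0 - mon N0 :: 'a::field mpoly) \<in> binom (4*k+2) ` R_set k"
    unfolding R_set_def binom_def by blast
next
  assume i: "i < k"
  have "(mon (Poly_Mapping.single i 1) - mon (Poly_Mapping.single (k+i) 1) :: 'a::field mpoly) = binom (4*k+2) (Ra k i)"
    unfolding binom_def Ra_pos[OF i] Ra_neg[OF i] ..
  moreover have "Ra k i \<in> R_set k" unfolding R_set_def using i by blast
  ultimately show "(mon (Poly_Mapping.single i 1) - mon (Poly_Mapping.single (k+i) 1) :: 'a::field mpoly) \<in> binom (4*k+2) ` R_set k" by simp
next
  assume i: "i < k"
  have "(mon (Poly_Mapping.single (2*k+i) 1) - mon (Poly_Mapping.single (3*k+i) 1) :: 'a::field mpoly) = binom (4*k+2) (Rb k i)"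
    unfolding binom_def Rb_pos[OF i] Rb_neg[OF i] ..
  moreover have "Rb k i \<in> R_set k" unfolding R_set_def using i by blast
  ultimately show "(mon (Poly_Mapping.single (2*k+i) 1) - mon (Poly_Mapping.single (3*k+i) 1) :: 'a::field mpoly) \<in> binom (4*k+2) ` R_set k" by simp
qed

lemma main:
  "is_reduced_groebner_basis (4*k+2)
     (toric_ideal (2*k+1) (4*k+2) (A_mat k) :: 'a::field mpoly set)
     (binom (4*k+2) ` R_set k)"
proof -
  let ?n = "4*k+2"
  let ?I = "toric_ideal (2*k+1) (4*k+2) (A_mat k) :: 'a::field mpoly set"
  let ?G = "binom (4*k+2) ` R_set k :: 'a::field mpoly set"
  have fin: "finite ?G"
  proof -
    have "R_set k \<subseteq> insert (R0 k) (Ra k ` {..<k} \<union> Rb k ` {..<k})"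
      unfolding R_set_def by blast
    then have "finite (R_set k)" by (rule finite_subset) simp
    then show ?thesis by simp
  qed
  have sub: "?G \<subseteq> ?I" using binom_in_toric G_kernel by blast
  have nz: "0 \<notin> ?G"
  proof
    assume "0 \<in> ?G"
    from G_elem[OF this] show False
    proof (elim disjE exE conjE)
      assume e: "(0::'a mpoly) = mon P0 - mon N0"
      have "Poly_Mapping.keys (mon P0 - mon N0 :: 'a mpoly) = {}" unfolding e[symmetric] by simp
      then show False unfolding G_lead(2) by simp
    next
      fix i assume i: "i < k" "(0::'a mpoly) = mon (Poly_Mapping.single i 1) - mon (Poly_Mapping.single (k+i) 1)"
      have "Poly_Mapping.keys (mon (Poly_Mapping.single i 1) - mon (Poly_Mapping.single (k+i) 1) :: 'a mpoly) = {}" unfolding i(2)[symmetric] by simp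
      then show False unfolding G_lead(5)[OF i(1)] by simp
    next
      fix i assume i: "i < k" "(0::'a mpoly) = mon (Poly_Mapping.single (2*k+i) 1) - mon (Poly_Mapping.single (3*k+i) 1)"
      have "Poly_Mapping.keys (mon (Poly_Mapping.single (2*k+i) 1) - mon (Poly_Mapping.single (3*k+i) 1) :: 'a mpoly) = {}" unfolding i(2)[symmetric] by simp
      then show False unfolding G_lead(8)[OF i(1)] by simp
    qed
  qed
  have lc: "\<forall>g\<in>?G. lead_coeff_mp g = 1"
  proof
    fix g assume "g \<in> ?G"
    from G_elem[OF this] show "lead_coeff_mp g = 1"
    proof (elim disjE exE conjE)
      assume e: "g = mon P0 - mon N0"
      show ?thesis unfolding lead_coeff_mp_def e G_lead(1) G_lead(3) ..
    next
      fix i assume i: "i < k" "g = mon (Poly_Mapping.single i 1) - mon (Poly_Mapping.single (k+i) 1)"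
      show ?thesis unfolding lead_coeff_mp_def i(2) G_lead(4)[OF i(1)] G_lead(6)[OF i(1)] ..
    next
      fix i assume i: "i < k" "g = mon (Poly_Mapping.single (2*k+i) 1) - mon (Poly_Mapping.single (3*k+i) 1)"
      show ?thesis unfolding lead_coeff_mp_def i(2) G_lead(7)[OF i(1)] G_lead(9)[OF i(1)] ..
    qed
  qed
  have red: "\<forall>g\<in>?G. \<forall>g'\<in>?G. g' \<noteq> g \<longrightarrow> (\<forall>m\<in>Poly_Mapping.keys g. \<not> mon_dvd (lead_mon g') m)"
  proof (intro ballI impI notI)
    fix g g' m assume g: "g \<in> ?G" and g': "g' \<in> ?G" and ne: "g' \<noteq> g" and m: "m \<in> Poly_Mapping.keys g"
      and dv: "mon_dvd (lead_mon g') m"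
    from G_elem[OF g'] show False
    proof (elim disjE exE conjE)
      assume e: "g' = mon P0 - mon N0"
      have "mon_dvd P0 m" using dv unfolding e G_lead(1) .
      then have "1 \<le> Poly_Mapping.lookup m (4*k)" by (rule P0_dvd)
      then have "g = mon P0 - mon N0" using LC[OF g m] by simp
      then show False using ne e by simp
    next
      fix i assume i: "i < k" "g' = mon (Poly_Mapping.single i 1) - mon (Poly_Mapping.single (k+i) 1)"
      have "mon_dvd (Poly_Mapping.single i 1) m" using dv unfolding i(2) G_lead(4)[OF i(1)] .
      then have "1 \<le> Poly_Mapping.lookup m i" by (rule mon_dvd_single)
      then have "g = g'" using LA[OF i(1) g m] i(2) by simp
      then show False using ne by simp
    next
      fix i assume i: "i < k" "g' = mon (Poly_Mapping.single (2*k+i) 1) - mon (Poly_Mapping.single (3*k+i) 1)"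
      have "mon_dvd (Poly_Mapping.single (2*k+i) 1) m" using dv unfolding i(2) G_lead(7)[OF i(1)] .
      then have "1 \<le> Poly_Mapping.lookup m (2*k+i)" by (rule mon_dvd_single)
      then have "g = g'" using LB[OF i(1) g m] i(2) by simp
      then show False using ne by simp
    qed
  qed
  let ?LG = "{mon (lead_mon g) | g. g \<in> ?G}"
  have LGI: "\<And>g. g \<in> ?G \<Longrightarrow> mon (lead_mon g) \<in> ?LG" by blast
  have eq: "ideal_gen ?n ?LG = initial_ideal ?n ?I"
  proof
    show "ideal_gen ?n ?LG \<subseteq> initial_ideal ?n ?I"
      unfolding initial_ideal_def
    proof (rule ideal_gen_mono, rule subsetI)
      fix p assume "p \<in> ?LG"
      then obtain g where g: "p = mon (lead_mon g)" "g \<in> ?G" by blast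
      have "g \<in> ?I" "g \<noteq> 0" using g(2) sub nz by auto
      then show "p \<in> {mon (lead_mon f) | f. f \<in> ?I \<and> f \<noteq> 0}" using g(1) by blast
    qed
  next
    show "initial_ideal ?n ?I \<subseteq> ideal_gen ?n ?LG"
      unfolding initial_ideal_def
    proof (rule ideal_gen_sub, rule subsetI)
      fix p assume "p \<in> {mon (lead_mon f) | f. f \<in> ?I \<and> f \<noteq> 0}"
      then obtain f where f: "p = mon (lead_mon f)" "f \<in> ?I" "f \<noteq> 0" by blast
      have "lead_mon f \<in> Poly_Mapping.keys f" using lead_mon_prop[OF f(3)] by blast
      moreover have "f \<in> polyring ?n" using toric_polyring f(2) by blast
      ultimately have ks: "Poly_Mapping.keys (lead_mon f) \<subseteq> {..<?n}" unfolding polyring_def by blast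
      from key[OF f(2) f(3)] show "p \<in> ideal_gen ?n ?LG"
      proof (elim disjE exE conjE)
        fix i assume i: "i < k" "1 \<le> Poly_Mapping.lookup (lead_mon f) i"
        have "mon (Poly_Mapping.single i 1) \<in> ?LG"
        proof -
          have "mon (lead_mon (mon (Poly_Mapping.single i 1) - mon (Poly_Mapping.single (k+i) 1) :: 'a mpoly)) \<in> ?LG" by (rule LGI[OF G_in(2)[OF i(1)]])
          then show ?thesis unfolding G_lead(4)[OF i(1)] .
        qed
        then show ?thesis unfolding f(1) by (rule mon_factor[OF single_dvd[OF i(2)] ks])
      next
        fix i assume i: "i < k" "1 \<le> Poly_Mapping.lookup (lead_mon f) (2*k+i)"
        have "mon (Poly_Mapping.single (2*k+i) 1) \<in> ?LG"
        proof -
          have "mon (lead_mon (mon (Poly_Mapping.single (2*k+i) 1) - mon (Poly_Mapping.single (3*k+i) 1) :: 'a mpoly)) \<in> ?LG" by (rule LGI[OF G_in(3)[OF i(1)]])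
          then show ?thesis unfolding G_lead(7)[OF i(1)] .
        qed
        then show ?thesis unfolding f(1) by (rule mon_factor[OF single_dvd[OF i(2)] ks])
      next
        assume b: "\<forall>i<k. 1 \<le> Poly_Mapping.lookup (lead_mon f) (k+i)" and s: "1 \<le> Poly_Mapping.lookup (lead_mon f) (4*k)"
        have dv: "mon_dvd P0 (lead_mon f)"
          unfolding mon_dvd_def
        proof
          fix j
          show "Poly_Mapping.lookup P0 j \<le> Poly_Mapping.lookup (lead_mon f) j"
          proof (cases "(k \<le> j \<and> j < 2*k) \<or> j = 4*k")
            case True
            then show ?thesis
            proof
              assume j: "k \<le> j \<and> j < 2*k"
              then have "j = k + (j - k)" "j - k < k" by auto
              then have "1 \<le> Poly_Mapping.lookup (lead_mon f) (k + (j - k))" using b by blast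
              then have "1 \<le> Poly_Mapping.lookup (lead_mon f) j" using \<open>j = k + (j - k)\<close> by simp
              then show ?thesis using R0_pos_lookup[of k j] by simp
            next
              assume "j = 4*k" then show ?thesis using s R0_pos_lookup[of k j] by simp
            qed
          next
            case False then show ?thesis using R0_pos_lookup[of k j] by auto
          qed
        qed
        have "mon P0 \<in> ?LG"
        proof -
          have "mon (lead_mon (mon P0 - mon N0 :: 'a mpoly)) \<in> ?LG" by (rule LGI[OF G_in(1)])
          then show ?thesis unfolding G_lead(1) .
        qed
        then show ?thesis unfolding f(1) by (rule mon_factor[OF dv ks])
      qed
    qed
  qed
  show ?thesis
    unfolding is_reduced_groebner_basis_def is_groebner_basis_def
    by (intro conjI fin sub nz eq lc red)
qed
end



theorem theorem3:
  fixes k :: nat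
  assumes "k \<ge> 1"
  shows "is_reduced_groebner_basis (4*k+2)
           (toric_ideal (2*k+1) (4*k+2) (A_mat k) :: 'a::field mpoly set)
           (binom (4*k+2) ` R_set k)"
  using main[OF assms] .

end
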